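(* Let $n\ge1$, $Q=2n+2$, fix constants $0<c_1<c_2<\infty$, and for $k\in\mathbb{Z}$ and functions $f,g$ on $\mathbb{H}^n$ define $$B(f,g)(x)=\int_{c_1\le|y|\le c_2} f(xy^{-1})g(xy)\,dy,\qquad B_k(f,g)(x)=\int_{c_12^{-k}\le|y|\le c_22^{-k}} f(xy^{-1})g(xy)\,dy.$$ Then, with implicit constants independent of $f,g\in L^1(\mathbb{H}^n)$ and of $k\in\mathbb{Z}$: (i) $\|B(f,g)\|_{L^{1/2}(\mathbb{H}^n)}\lesssim\|f\|_{L^1(\mathbb{H}^n)}\|g\|_{L^1(\mathbb{H}^n)}$; (ii) $\|B(f,g)\|_{L^{1}(\mathbb{H}^n)}\lesssim\|f\|_{L^1(\mathbb{H}^n)}\|g\|_{L^1(\mathbb{H}^n)}$; (iii) $\|B_k(f,g)\|_{L^{1/2}(\mathbb{H}^n)}\lesssim 2^{-Qk}\|f\|_{L^1(\mathbb{H}^n)}\|g\|_{L^1(\mathbb{H}^n)}$; (iv) $\|B_k(f,g)\|_{L^{1}(\mathbb{H}^n)}\lesssim\|f\|_{L^1(\mathbb{H}^n)}\|g\|_{L^1(\mathbb{H}^n)}$.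
   Context: $\mathbb{H}^n=\mathbb{C}^n\times\mathbb{R}$ is the Heisenberg group with group law $(z,t)\cdot(w,s)=(z+w,\,t+s+\tfrac12\operatorname{Im}(z\cdot\bar w))$, inverse $(z,t)^{-1}=(-z,-t)$, Haar measure $dz\,dt$, homogeneous dimension $Q=2n+2$, and Koranyi norm $|(z,t)|=(|z|^4+t^2)^{1/4}$. $\|h\|_{L^{1/2}}=(\int|h|^{1/2})^2$. $A\lesssim B$ means $A\le CB$ for a constant $C$ independent of the quantities involved. *)

theory Defs
  imports "HOL-Analysis.Analysis"
begin

text \<open>A point (z,t) with z = x + i y in C^n
  is represented as ((x, y), t) with x, y :: real^'n, so that the Lebesgue measure
  lborel on this Euclidean space is the Haar measure dz dt.  The dimension n is
  CARD('n).\<close>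

type_synonym 'n heis = "((real^'n) \<times> (real^'n)) \<times> real"

definition heis_z :: "'n::finite heis \<Rightarrow> 'n \<Rightarrow> complex" where
  "heis_z p j = Complex (fst (fst p) $ j) (snd (fst p) $ j)"

definition heis_mult :: "'n::finite heis \<Rightarrow> 'n heis \<Rightarrow> 'n heis" where
  "heis_mult p q = (fst p + fst q,
     snd p + snd q + (1/2) * Im (\<Sum>j\<in>UNIV. heis_z p j * cnj (heis_z q j)))"

definition heis_inv :: "'n::finite heis \<Rightarrow> 'n heis" where
  "heis_inv p = (- fst p, - snd p)"

definition koranyi :: "'n::finite heis \<Rightarrow> real" where
  "koranyi p = ((\<Sum>j\<in>UNIV. (cmod (heis_z p j))\<^sup>2)\<^sup>2 + (snd p)\<^sup>2) powr (1/4)"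

definition heis_annulus :: "real \<Rightarrow> real \<Rightarrow> 'n::finite heis set" where
  "heis_annulus a b = {y. a \<le> koranyi y \<and> koranyi y \<le> b}"

definition heis_bil :: "real \<Rightarrow> real \<Rightarrow> ('n::finite heis \<Rightarrow> complex) \<Rightarrow> ('n heis \<Rightarrow> complex)
    \<Rightarrow> 'n heis \<Rightarrow> complex" where
  "heis_bil a b f g x =
     (LINT y : heis_annulus a b | lborel. f (heis_mult x (heis_inv y)) * g (heis_mult x y))"

definition L1norm :: "('n::finite heis \<Rightarrow> complex) \<Rightarrow> ennreal" where
  "L1norm h = (\<integral>\<^sup>+ x. ennreal (cmod (h x)) \<partial>lborel)"

definition Lhalfnorm :: "('n::finite heis \<Rightarrow> complex) \<Rightarrow> ennreal" where
  "Lhalfnorm h = (\<integral>\<^sup>+ x. ennreal (sqrt (cmod (h x))) \<partial>lborel)\<^sup>2"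

end

theory Submission
  imports Defs
begin

definition sy :: "'n::finite heis \<Rightarrow> 'n heis \<Rightarrow> real" where
  "sy p q = (\<Sum>j\<in>UNIV. snd (fst p) $ j * fst (fst q) $ j - fst (fst p) $ j * snd (fst q) $ j)"

lemma Im_sum_eq: "Im (\<Sum>j\<in>UNIV. heis_z p j * cnj (heis_z q j)) = sy p q"
  unfolding sy_def heis_z_def by (simp add: Im_sum)

lemma heis_mult_eq: "heis_mult p q = (fst p + fst q, snd p + snd q + sy p q / 2)"
  unfolding heis_mult_def Im_sum_eq by simp

lemma sy_cont: "continuous_on UNIV (\<lambda>x. sy (f x) (g x))" if "continuous_on UNIV f" "continuous_on UNIV g"
  unfolding sy_def using that by (intro continuous_intros)


lemma heis_mult_cont: "continuous_on UNIV (\<lambda>p::'n::finite heis \<times> 'n heis. heis_mult (fst p) (snd p))"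
  unfolding heis_mult_eq sy_def by (intro continuous_intros) auto

lemma heis_mult_meas[measurable]:
  assumes [measurable]: "f \<in> measurable M borel" "g \<in> measurable M borel"
  shows "(\<lambda>x. heis_mult (f x) (g x) :: 'n::finite heis) \<in> measurable M borel"
proof -
  have "(\<lambda>p::'n heis \<times> 'n heis. heis_mult (fst p) (snd p)) \<in> borel_measurable borel"
    by (rule borel_measurable_continuous_onI[OF heis_mult_cont])
  from measurable_compose[OF measurable_Pair[OF assms, unfolded borel_prod] this] show ?thesis by simp
qed

lemma heis_inv_meas[measurable]:
  assumes [measurable]: "f \<in> measurable M borel"
  shows "(\<lambda>x. heis_inv (f x) :: 'n::finite heis) \<in> measurable M borel"
proof -
  have "heis_inv p = - p" for p :: "'n heis" unfolding heis_inv_def by (simp add: prod_eq_iff)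
  then show ?thesis by simp
qed

lemma koranyi_meas[measurable]: "koranyi \<in> borel_measurable (borel :: 'n::finite heis measure)"
proof -
  have "(\<lambda>p::'n heis. (\<Sum>j\<in>UNIV. (sqrt ((fst (fst p) $ j)\<^sup>2 + (snd (fst p) $ j)\<^sup>2))\<^sup>2)\<^sup>2 + (snd p)\<^sup>2) \<in> borel_measurable borel"
    by (intro borel_measurable_continuous_onI continuous_intros)
  then show ?thesis unfolding koranyi_def heis_z_def complex_norm
    by (intro powr_real_measurable) auto
qed

lemma nn_integral_shift:
  fixes c :: "'a::euclidean_space"
  assumes [measurable]: "h \<in> borel_measurable borel"
  shows "(\<integral>\<^sup>+ x. h (c + x) \<partial>lborel) = (\<integral>\<^sup>+ x. h x \<partial>lborel)"
proof -
  have "(\<integral>\<^sup>+ x. h x \<partial>lborel) = (\<integral>\<^sup>+ x. h x \<partial>distr lborel borel ((+) c))"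
    by (simp add: lborel_distr_plus)
  also have "\<dots> = (\<integral>\<^sup>+ x. h (c + x) \<partial>lborel)"
    by (subst nn_integral_distr) auto
  finally show ?thesis ..
qed

lemma nn_integral_scale2:
  fixes c :: "'a::euclidean_space"
  assumes [measurable]: "h \<in> borel_measurable borel"
  shows "2 ^ DIM('a) * (\<integral>\<^sup>+ x. h (c + 2 *\<^sub>R x) \<partial>lborel) = (\<integral>\<^sup>+ x. h x \<partial>lborel)"
proof -
  have L: "lborel = density (distr lborel borel (\<lambda>x. c + 2 *\<^sub>R x)) (\<lambda>_. ennreal (2^DIM('a)))"
    using lborel_affine[of 2 c] by simp
  have "(\<integral>\<^sup>+ x. h x \<partial>lborel) = (\<integral>\<^sup>+ x. h x \<partial>density (distr lborel borel (\<lambda>x. c + 2 *\<^sub>R x)) (\<lambda>_. ennreal (2^DIM('a))))"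
    by (subst L[symmetric]) (rule refl)
  also have "\<dots> = (\<integral>\<^sup>+ x. 2 ^ DIM('a) * h (c + 2 *\<^sub>R x) \<partial>lborel)"
    by (subst nn_integral_density) (auto simp: nn_integral_distr ennreal_power[symmetric])
  also have "\<dots> = 2 ^ DIM('a) * (\<integral>\<^sup>+ x. h (c + 2 *\<^sub>R x) \<partial>lborel)"
    by (rule nn_integral_cmult) auto
  finally show ?thesis ..
qed


lemma nn_integral_heis_split:
  fixes h :: "'n::finite heis \<Rightarrow> ennreal"
  assumes [measurable]: "h \<in> borel_measurable borel"
  shows "(\<integral>\<^sup>+ p. h p \<partial>lborel) = (\<integral>\<^sup>+ a. (\<integral>\<^sup>+ s. h (a, s) \<partial>lborel) \<partial>lborel)"
proof -
  have m: "h \<in> borel_measurable (lborel \<Otimes>\<^sub>M lborel)"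
    unfolding lborel_prod by simp
  show ?thesis
    using lborel.nn_integral_fst[OF m] unfolding lborel_prod by simp
qed


lemma meas_comp_Pair2:
  assumes "h \<in> borel_measurable borel"
  shows "(\<lambda>s. h (c, s)) \<in> borel_measurable borel"
  by (rule measurable_compose[OF borel_measurable_continuous_onI assms]) (intro continuous_intros)

lemma meas_left: assumes "h \<in> borel_measurable borel"
  shows "(\<lambda>y. h (heis_mult x y)) \<in> borel_measurable borel"
  by (rule measurable_compose[OF heis_mult_meas[OF measurable_const measurable_ident_sets[OF refl]] assms]) simp

lemma meas_right: assumes "h \<in> borel_measurable borel"
  shows "(\<lambda>y. h (heis_mult y x)) \<in> borel_measurable borel"
  by (rule measurable_compose[OF heis_mult_meas[OF measurable_ident_sets[OF refl] measurable_const] assms]) simp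

lemma heis_mult_x_eq: "heis_mult x (a, s) = (fst x + a, (snd x + sy x (a, s) / 2) + s)"
  by (simp add: heis_mult_eq)

lemma heis_mult_y_eq: "heis_mult (a, s) x = (fst x + a, (snd x + sy (a, s) x / 2) + s)"
  by (simp add: heis_mult_eq add.commute add.left_commute)

lemma meas_nn_int_snd:
  fixes h :: "('a::euclidean_space \<times> 'b::euclidean_space) \<Rightarrow> ennreal"
  assumes "h \<in> borel_measurable borel"
  shows "(\<lambda>a. \<integral>\<^sup>+ s. h (a, s) \<partial>lborel) \<in> borel_measurable borel"
proof -
  have "(\<lambda>(a, s). h (a, s)) \<in> borel_measurable (lborel \<Otimes>\<^sub>M lborel)"
    unfolding lborel_prod using assms by simp
  then have "(\<lambda>a. \<integral>\<^sup>+ s. h (a, s) \<partial>lborel) \<in> borel_measurable lborel"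
    by (rule lborel.borel_measurable_nn_integral)
  then show ?thesis by simp
qed

lemma left_inv:
  fixes h :: "'n::finite heis \<Rightarrow> ennreal"
  assumes [measurable]: "h \<in> borel_measurable borel"
  shows "(\<integral>\<^sup>+ y. h (heis_mult x y) \<partial>lborel) = (\<integral>\<^sup>+ y. h y \<partial>lborel)"
proof -
  have m: "(\<lambda>y. h (heis_mult x y)) \<in> borel_measurable borel" by (rule meas_left) fact
  have "(\<integral>\<^sup>+ y. h (heis_mult x y) \<partial>lborel)
      = (\<integral>\<^sup>+ a. (\<integral>\<^sup>+ s. h (fst x + a, (snd x + sy x (a, s) / 2) + s) \<partial>lborel) \<partial>lborel)"
    unfolding nn_integral_heis_split[OF m] heis_mult_x_eq ..
  also have "\<dots> = (\<integral>\<^sup>+ a. (\<integral>\<^sup>+ s. h (fst x + a, s) \<partial>lborel) \<partial>lborel)"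
  proof (rule nn_integral_cong)
    fix a :: "(real^'n) \<times> (real^'n)"
    obtain K where e: "\<And>s. sy x (a, s) = K" unfolding sy_def by simp
    show "(\<integral>\<^sup>+ s. h (fst x + a, (snd x + sy x (a, s) / 2) + s) \<partial>lborel) = (\<integral>\<^sup>+ s. h (fst x + a, s) \<partial>lborel)"
      unfolding e by (rule nn_integral_shift[where h="\<lambda>s. h (fst x + a, s)"]) (rule meas_comp_Pair2, fact)
  qed
  also have "\<dots> = (\<integral>\<^sup>+ a. (\<integral>\<^sup>+ s. h (a, s) \<partial>lborel) \<partial>lborel)"
    by (rule nn_integral_shift[where h="\<lambda>a. \<integral>\<^sup>+ s. h (a, s) \<partial>lborel"]) 
       (rule meas_nn_int_snd, fact)
  also have "\<dots> = (\<integral>\<^sup>+ y. h y \<partial>lborel)"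
    by (rule nn_integral_heis_split[symmetric]) fact
  finally show ?thesis .
qed

lemma right_inv:
  fixes h :: "'n::finite heis \<Rightarrow> ennreal"
  assumes [measurable]: "h \<in> borel_measurable borel"
  shows "(\<integral>\<^sup>+ y. h (heis_mult y x) \<partial>lborel) = (\<integral>\<^sup>+ y. h y \<partial>lborel)"
proof -
  have m: "(\<lambda>y. h (heis_mult y x)) \<in> borel_measurable borel" by (rule meas_right) fact
  have "(\<integral>\<^sup>+ y. h (heis_mult y x) \<partial>lborel)
      = (\<integral>\<^sup>+ a. (\<integral>\<^sup>+ s. h (fst x + a, (snd x + sy (a, s) x / 2) + s) \<partial>lborel) \<partial>lborel)"
    unfolding nn_integral_heis_split[OF m] heis_mult_y_eq ..
  also have "\<dots> = (\<integral>\<^sup>+ a. (\<integral>\<^sup>+ s. h (fst x + a, s) \<partial>lborel) \<partial>lborel)"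
  proof (rule nn_integral_cong)
    fix a :: "(real^'n) \<times> (real^'n)"
    obtain K where e: "\<And>s. sy (a, s) x = K" unfolding sy_def by simp
    show "(\<integral>\<^sup>+ s. h (fst x + a, (snd x + sy (a, s) x / 2) + s) \<partial>lborel) = (\<integral>\<^sup>+ s. h (fst x + a, s) \<partial>lborel)"
      unfolding e by (rule nn_integral_shift[where h="\<lambda>s. h (fst x + a, s)"]) (rule meas_comp_Pair2, fact)
  qed
  also have "\<dots> = (\<integral>\<^sup>+ a. (\<integral>\<^sup>+ s. h (a, s) \<partial>lborel) \<partial>lborel)"
    by (rule nn_integral_shift[where h="\<lambda>a. \<integral>\<^sup>+ s. h (a, s) \<partial>lborel"]) 
       (rule meas_nn_int_snd, fact)
  also have "\<dots> = (\<integral>\<^sup>+ y. h y \<partial>lborel)"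
    by (rule nn_integral_heis_split[symmetric]) fact
  finally show ?thesis .
qed


lemma heis_inv_eq: "heis_inv p = - p"
  unfolding heis_inv_def by (simp add: prod_eq_iff)

lemma sy_neg2: "sy x (- y) = - sy x y"
  unfolding sy_def by (simp add: sum_negf[symmetric] algebra_simps)

lemma mult_inv_eq: "heis_mult x (heis_inv y) = 2 *\<^sub>R x + heis_inv (heis_mult x y)"
  unfolding heis_inv_eq heis_mult_eq sy_neg2 by (simp add: prod_eq_iff algebra_simps vec_eq_iff)

lemma meas_pair_lborel:
  fixes f :: "('a::euclidean_space \<times> 'b::euclidean_space) \<Rightarrow> ennreal"
  assumes "f \<in> borel_measurable borel"
  shows "f \<in> borel_measurable (lborel \<Otimes>\<^sub>M lborel)"
  unfolding lborel_prod using assms by simp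

lemma core:
  fixes F G :: "'n::finite heis \<Rightarrow> ennreal"
  assumes F[measurable]: "F \<in> borel_measurable borel" and G[measurable]: "G \<in> borel_measurable borel"
  shows "2 ^ DIM('n heis) * (\<integral>\<^sup>+ x. (\<integral>\<^sup>+ y. F (heis_mult x (heis_inv y)) * G (heis_mult x y) \<partial>lborel) \<partial>lborel)
    = (\<integral>\<^sup>+ x. F x \<partial>lborel) * (\<integral>\<^sup>+ x. G x \<partial>lborel)"
proof -
  have c1: "continuous_on UNIV (\<lambda>p::'n heis \<times> 'n heis. 2 *\<^sub>R fst p + heis_inv (snd p))"
    unfolding heis_inv_eq by (intro continuous_intros)
  have m1: "(\<lambda>p::'n heis \<times> 'n heis. F (2 *\<^sub>R fst p + heis_inv (snd p)) * G (snd p)) \<in> borel_measurable borel"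
    by (intro borel_measurable_times_ennreal measurable_compose[OF borel_measurable_continuous_onI[OF c1] F]
        measurable_compose[OF borel_measurable_continuous_onI G] continuous_intros) 
  have m2: "(\<lambda>v. F (2 *\<^sub>R x + heis_inv v) * G v) \<in> borel_measurable borel" for x :: "'n heis"
    unfolding heis_inv_eq
    by (intro borel_measurable_times_ennreal measurable_compose[OF borel_measurable_continuous_onI F] continuous_intros G)
  have "(\<integral>\<^sup>+ x. (\<integral>\<^sup>+ y. F (heis_mult x (heis_inv y)) * G (heis_mult x y) \<partial>lborel) \<partial>lborel)
     = (\<integral>\<^sup>+ x. (\<integral>\<^sup>+ v. F (2 *\<^sub>R x + heis_inv v) * G v \<partial>lborel) \<partial>lborel)"
    unfolding mult_inv_eq by (intro nn_integral_cong left_inv[OF m2])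
  also have "\<dots> = (\<integral>\<^sup>+ v. (\<integral>\<^sup>+ x. F (2 *\<^sub>R x + heis_inv v) * G v \<partial>lborel) \<partial>lborel)"
    by (rule lborel_pair.Fubini'[symmetric]) (unfold case_prod_beta, rule meas_pair_lborel[OF m1])
  also have "\<dots> = (\<integral>\<^sup>+ v. (\<integral>\<^sup>+ x. F (heis_inv v + 2 *\<^sub>R x) \<partial>lborel) * G v \<partial>lborel)"
  proof (rule nn_integral_cong)
    fix v :: "'n heis"
    have "(\<integral>\<^sup>+ x. F (2 *\<^sub>R x + heis_inv v) * G v \<partial>lborel) = (\<integral>\<^sup>+ x. F (2 *\<^sub>R x + heis_inv v) \<partial>lborel) * G v"
      by (rule nn_integral_multc) (unfold heis_inv_eq measurable_lborel2, intro measurable_compose[OF borel_measurable_continuous_onI F] continuous_intros)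
    then show "(\<integral>\<^sup>+ x. F (2 *\<^sub>R x + heis_inv v) * G v \<partial>lborel) = (\<integral>\<^sup>+ x. F (heis_inv v + 2 *\<^sub>R x) \<partial>lborel) * G v"
      by (simp add: add.commute)
  qed
  finally have eq: "(\<integral>\<^sup>+ x. (\<integral>\<^sup>+ y. F (heis_mult x (heis_inv y)) * G (heis_mult x y) \<partial>lborel) \<partial>lborel)
    = (\<integral>\<^sup>+ v. (\<integral>\<^sup>+ x. F (heis_inv v + 2 *\<^sub>R x) \<partial>lborel) * G v \<partial>lborel)" .
  have m3: "(\<lambda>v. \<integral>\<^sup>+ x. F (heis_inv v + 2 *\<^sub>R x) \<partial>lborel) \<in> borel_measurable borel"
  proof -
    have c: "continuous_on UNIV (\<lambda>p::'n heis \<times> 'n heis. heis_inv (fst p) + 2 *\<^sub>R snd p)"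
      unfolding heis_inv_eq by (intro continuous_intros)
    have "(\<lambda>a. \<integral>\<^sup>+ s. (\<lambda>p. F (heis_inv (fst p) + 2 *\<^sub>R snd p)) (a, s) \<partial>lborel) \<in> borel_measurable borel"
      by (rule meas_nn_int_snd) (rule measurable_compose[OF borel_measurable_continuous_onI[OF c] F])
    then show ?thesis by simp
  qed
  have "2 ^ DIM('n heis) * (\<integral>\<^sup>+ v. (\<integral>\<^sup>+ x. F (heis_inv v + 2 *\<^sub>R x) \<partial>lborel) * G v \<partial>lborel)
     = (\<integral>\<^sup>+ v. (2 ^ DIM('n heis) * (\<integral>\<^sup>+ x. F (heis_inv v + 2 *\<^sub>R x) \<partial>lborel)) * G v \<partial>lborel)"
    by (subst nn_integral_cmult[symmetric]) (auto simp: mult.assoc intro!: borel_measurable_times_ennreal m3)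
  also have "\<dots> = (\<integral>\<^sup>+ v. (\<integral>\<^sup>+ x. F x \<partial>lborel) * G v \<partial>lborel)"
    by (subst nn_integral_scale2) (auto intro: F)
  also have "\<dots> = (\<integral>\<^sup>+ x. F x \<partial>lborel) * (\<integral>\<^sup>+ x. G x \<partial>lborel)"
    by (rule nn_integral_cmult) simp
  finally show ?thesis using eq by simp
qed


definition esqrt :: "ennreal \<Rightarrow> ennreal" where
  "esqrt x = (if x = top then top else ennreal (sqrt (enn2real x)))"

lemma esqrt_sq: "(esqrt x)\<^sup>2 = x"
  unfolding esqrt_def
  by (cases x) (auto simp: ennreal_power power2_eq_square ennreal_mult[symmetric])

lemma esqrt_of_sq: "esqrt (x\<^sup>2) = x"
  unfolding esqrt_def
  by (cases x) (auto simp: ennreal_power power2_eq_square[symmetric])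

lemma esqrt_mono: "x \<le> y \<Longrightarrow> esqrt x \<le> esqrt y"
  unfolding esqrt_def
  by (cases x; cases y) (auto simp: ennreal_le_iff2 top_unique)

lemma esqrt_ennreal: "0 \<le> c \<Longrightarrow> esqrt (ennreal c) = ennreal (sqrt c)"
  unfolding esqrt_def by simp

lemma esqrt_mult: "esqrt (x * y) = esqrt x * esqrt y"
proof -
  have "esqrt (x * y) = esqrt ((esqrt x * esqrt y)\<^sup>2)"
    by (simp add: power_mult_distrib esqrt_sq)
  then show ?thesis by (simp add: esqrt_of_sq)
qed

lemma sq_le_imp_le_ennreal: "(x::ennreal)\<^sup>2 \<le> y\<^sup>2 \<Longrightarrow> x \<le> y"
  using esqrt_mono[of "x\<^sup>2" "y\<^sup>2"] by (simp add: esqrt_of_sq)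


lemma sy_add1: "sy (heis_mult a b) c = sy a c + sy b c"
  unfolding sy_def heis_mult_eq by (simp add: sum.distrib[symmetric] algebra_simps)

lemma sy_add2: "sy a (heis_mult b c) = sy a b + sy a c"
  unfolding sy_def heis_mult_eq by (simp add: sum.distrib[symmetric] algebra_simps)


definition hbox :: "real \<Rightarrow> real \<Rightarrow> 'n::finite heis set" where
  "hbox R T = (cbox (- vec R) (vec R) \<times> cbox (- vec R) (vec R)) \<times> {-T..T}"


lemma hbox_borel[measurable]: "hbox R T \<in> sets (borel :: 'n::finite heis measure)"
proof -
  have "closed (hbox R T :: 'n heis set)"
    unfolding hbox_def by (intro closed_Times closed_cbox closed_atLeastAtMost)
  then show ?thesis by (rule borel_closed)
qed


lemma emeasure_cbox_vec:
  assumes "0 \<le> R"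
  shows "emeasure lborel (cbox (- vec R) (vec R :: real^'n::finite)) = ennreal ((2*R) ^ CARD('n))"
proof -
  have "(\<Prod>b\<in>Basis. (vec R - (- vec R :: real^'n)) \<bullet> b) = (\<Prod>b\<in>(Basis::(real^'n) set). 2*R)"
    by (rule prod.cong) (auto simp: Basis_vec_def inner_axis)
  also have "\<dots> = (2*R) ^ CARD('n)" by simp
  finally have e: "(\<Prod>b\<in>Basis. (vec R - (- vec R :: real^'n)) \<bullet> b) = (2*R) ^ CARD('n)" .
  have "\<forall>b\<in>Basis. (- vec R :: real^'n) \<bullet> b \<le> vec R \<bullet> b"
    using assms by (auto simp: Basis_vec_def inner_axis)
  then show ?thesis using e
    by (subst emeasure_lborel_cbox_eq) simp
qed
lemma emeasure_hbox:
  assumes "0 \<le> R" "0 \<le> T"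
  shows "emeasure lborel (hbox R T :: 'n::finite heis set) = ennreal ((2*R) ^ (2 * CARD('n)) * (2*T))"
proof -
  let ?A = "cbox (- vec R) (vec R :: real^'n)"
  have bA: "?A \<in> sets lborel" by simp
  have bAA: "?A \<times> ?A \<in> sets lborel" 
    using borel_closed[OF closed_Times[OF closed_cbox closed_cbox], of "- vec R" "vec R :: real^'n" "- vec R" "vec R"] by simp
  have e1: "emeasure lborel (?A \<times> ?A) = ennreal ((2*R) ^ CARD('n)) * ennreal ((2*R) ^ CARD('n))"
    using lborel.emeasure_pair_measure_Times[OF bA bA] unfolding lborel_prod emeasure_cbox_vec[OF assms(1)] .
  have e2: "emeasure lborel (hbox R T :: 'n heis set) = emeasure lborel (?A \<times> ?A) * emeasure lborel {-T..T}"
    using lborel.emeasure_pair_measure_Times[OF bAA, of "{-T..T}"] unfolding lborel_prod hbox_def by simp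
  have p: "(2*R)^(2*CARD('n)) = ((2*R)^CARD('n))^2" by (metis power_mult mult.commute)
  show ?thesis unfolding e2 e1 p using assms
    by (simp add: power2_eq_square ennreal_mult[symmetric])
qed

lemma esqrt_meas'[measurable]:
  assumes [measurable]: "f \<in> borel_measurable M"
  shows "(\<lambda>x. esqrt (f x)) \<in> borel_measurable M"
proof -
  have m1: "(\<lambda>x. ennreal (sqrt (enn2real (f x)))) \<in> borel_measurable M"
    by (intro measurable_compose[OF _ measurable_ennreal] measurable_compose[OF _ borel_measurable_sqrt]
        borel_measurable_enn2real assms)
  have m2: "{x \<in> space M. f x = top} \<in> sets M" by measurable
  have "(\<lambda>x. if f x = top then top else ennreal (sqrt (enn2real (f x)))) \<in> borel_measurable M"
    by (rule measurable_If[OF measurable_const m1 m2]) simp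
  then show ?thesis unfolding esqrt_def .
qed

lemma heis_assoc': "heis_mult (heis_mult a b) c = heis_mult a (heis_mult b c)"
  unfolding heis_mult_eq[of "heis_mult a b" c] heis_mult_eq[of a "heis_mult b c"] sy_add1 sy_add2
  unfolding heis_mult_eq[of a b] heis_mult_eq[of b c]
  by (simp add: prod_eq_iff algebra_simps add_divide_distrib)

lemma mem_cbox_vec: "x \<in> cbox (- vec R) (vec R :: real^'n::finite) \<longleftrightarrow> (\<forall>j. \<bar>x $ j\<bar> \<le> R)"
  unfolding mem_box_cart by (simp add: abs_le_iff) (metis minus_le_iff)

lemma mem_hbox': "p \<in> hbox R T \<longleftrightarrow>
   (\<forall>j. \<bar>fst (fst p) $ j\<bar> \<le> R \<and> \<bar>snd (fst p) $ j\<bar> \<le> R) \<and> \<bar>snd p\<bar> \<le> T"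
  unfolding hbox_def mem_Times_iff mem_cbox_vec by (auto simp: abs_le_iff)


lemma koranyi_bound:
  fixes y :: "'n::finite heis"
  assumes "koranyi y \<le> R" "0 < R"
  shows "(\<forall>j. \<bar>fst (fst y) $ j\<bar> \<le> R \<and> \<bar>snd (fst y) $ j\<bar> \<le> R) \<and> \<bar>snd y\<bar> \<le> R\<^sup>2"
proof -
  define S where "S = (\<Sum>j\<in>UNIV. (cmod (heis_z y j))\<^sup>2)"
  have S0: "0 \<le> S" unfolding S_def by (simp add: sum_nonneg)
  have k: "koranyi y = (S\<^sup>2 + (snd y)\<^sup>2) powr (1/4)" unfolding koranyi_def S_def ..
  have le: "S\<^sup>2 + (snd y)\<^sup>2 \<le> R ^ 4"
  proof (rule ccontr)
    assume "\<not> ?thesis"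
    then have "R ^ 4 < S\<^sup>2 + (snd y)\<^sup>2" by simp
    then have "(R ^ 4) powr (1/4) < (S\<^sup>2 + (snd y)\<^sup>2) powr (1/4)"
      using assms(2) by (intro powr_less_mono2) auto
    moreover have "(R ^ 4) powr (1/4) = R"
    proof -
      have e: "R^4 = R powr 4" using assms(2) by (simp add: powr_numeral)
      have "(R^4) powr (1/4) = (R powr 4) powr (1/4)" unfolding e ..
      also have "\<dots> = R powr (4 * (1/4))" by (simp only: powr_powr)
      also have "\<dots> = R" using assms(2) by simp
      finally show ?thesis .
    qed
    ultimately show False using assms(1) k by simp
  qed
  have R4: "(R\<^sup>2)\<^sup>2 = R ^ 4" by (metis power_mult num_double numeral_times_numeral)
  have S2: "0 \<le> S\<^sup>2" "0 \<le> (snd y)\<^sup>2" by simp_all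
  have t: "(snd y)\<^sup>2 \<le> (R\<^sup>2)\<^sup>2" unfolding R4 using le S2 by linarith
  have A: "\<bar>snd y\<bar> \<le> R\<^sup>2"
    using t power2_le_iff_abs_le[of "R^2" "snd y"] by (metis zero_le_power2)
  have "S\<^sup>2 \<le> (R\<^sup>2)\<^sup>2" unfolding R4 using le S2 by linarith
  then have SR: "S \<le> R\<^sup>2" using S0 power2_le_iff_abs_le[of "R^2" S] by (metis zero_le_power2 abs_of_nonneg)
  have B: "(fst (fst y) $ j)\<^sup>2 + (snd (fst y) $ j)\<^sup>2 \<le> S" for j
  proof -
    have "(cmod (heis_z y j))\<^sup>2 \<le> S" unfolding S_def
      by (rule member_le_sum) auto
    then show ?thesis unfolding heis_z_def by (simp add: cmod_power2)
  qed
  have "\<bar>fst (fst y) $ j\<bar> \<le> R \<and> \<bar>snd (fst y) $ j\<bar> \<le> R" for j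
  proof -
    have "(fst (fst y) $ j)\<^sup>2 \<le> R\<^sup>2" "(snd (fst y) $ j)\<^sup>2 \<le> R\<^sup>2"
      using B[of j] SR zero_le_power2[of "fst (fst y) $ j"] zero_le_power2[of "snd (fst y) $ j"] by linarith+
    then show ?thesis using assms(2) by (simp add: power2_le_iff_abs_le)
  qed
  then show ?thesis using A by blast
qed


lemma sy_bound:
  fixes p q :: "'n::finite heis" and R1 R2 :: real
  assumes "\<forall>j. \<bar>fst (fst p) $ j\<bar> \<le> R1 \<and> \<bar>snd (fst p) $ j\<bar> \<le> R1"
      and "\<forall>j. \<bar>fst (fst q) $ j\<bar> \<le> R2 \<and> \<bar>snd (fst q) $ j\<bar> \<le> R2"
  shows "\<bar>sy p q\<bar> \<le> 2 * CARD('n) * R1 * R2"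
proof -
  have "\<bar>sy p q\<bar> \<le> (\<Sum>j\<in>UNIV. \<bar>snd (fst p) $ j * fst (fst q) $ j - fst (fst p) $ j * snd (fst q) $ j\<bar>)"
    unfolding sy_def by (rule sum_abs)
  also have "\<dots> \<le> (\<Sum>j\<in>(UNIV::'n set). 2 * R1 * R2)"
  proof (rule sum_mono)
    fix j :: 'n
    have a: "\<bar>snd (fst p) $ j * fst (fst q) $ j\<bar> \<le> R1 * R2"
      unfolding abs_mult using assms by (intro mult_mono) auto
    have b: "\<bar>fst (fst p) $ j * snd (fst q) $ j\<bar> \<le> R1 * R2"
      unfolding abs_mult using assms by (intro mult_mono) auto
    show "\<bar>snd (fst p) $ j * fst (fst q) $ j - fst (fst p) $ j * snd (fst q) $ j\<bar> \<le> 2 * R1 * R2"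
      using a b abs_triangle_ineq4[of "snd (fst p) $ j * fst (fst q) $ j" "fst (fst p) $ j * snd (fst q) $ j"]
      by linarith
  qed
  also have "\<dots> = 2 * CARD('n) * R1 * R2" by simp
  finally show ?thesis .
qed

lemma box_mult:
  fixes z y :: "'n::finite heis" and r c2 :: real
  assumes z: "z \<in> hbox r (r\<^sup>2)" and y: "koranyi y \<le> c2 * r" and r: "0 < r" and c2: "0 < c2"
  shows "heis_mult z y \<in> hbox ((1 + c2) * r) ((1 + c2\<^sup>2 + CARD('n) * c2) * r\<^sup>2)"
    and "heis_mult z (heis_inv y) \<in> hbox ((1 + c2) * r) ((1 + c2\<^sup>2 + CARD('n) * c2) * r\<^sup>2)"
proof -
  have zb: "\<forall>j. \<bar>fst (fst z) $ j\<bar> \<le> r \<and> \<bar>snd (fst z) $ j\<bar> \<le> r" "\<bar>snd z\<bar> \<le> r\<^sup>2"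
    using z unfolding mem_hbox' by auto
  have yb: "\<forall>j. \<bar>fst (fst y) $ j\<bar> \<le> c2 * r \<and> \<bar>snd (fst y) $ j\<bar> \<le> c2 * r" "\<bar>snd y\<bar> \<le> (c2 * r)\<^sup>2"
    using koranyi_bound[OF y] r c2 by auto
  have yib: "\<forall>j. \<bar>fst (fst (heis_inv y)) $ j\<bar> \<le> c2 * r \<and> \<bar>snd (fst (heis_inv y)) $ j\<bar> \<le> c2 * r"
    "\<bar>snd (heis_inv y)\<bar> \<le> (c2 * r)\<^sup>2"
    using yb unfolding heis_inv_def by auto
  have s1: "\<bar>sy z y\<bar> \<le> 2 * CARD('n) * r * (c2 * r)" by (rule sy_bound[OF zb(1) yb(1)])
  have s2: "\<bar>sy z (heis_inv y)\<bar> \<le> 2 * CARD('n) * r * (c2 * r)" by (rule sy_bound[OF zb(1) yib(1)])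
  have e: "2 * real CARD('n) * r * (c2 * r) / 2 = CARD('n) * c2 * r\<^sup>2" by (simp add: power2_eq_square)
  have e2: "(c2 * r)\<^sup>2 = c2\<^sup>2 * r\<^sup>2" by (simp add: power_mult_distrib)
  have T: "\<bar>snd z + snd w + sy z w / 2\<bar> \<le> (1 + c2\<^sup>2 + CARD('n) * c2) * r\<^sup>2"
    if "\<bar>snd w\<bar> \<le> (c2 * r)\<^sup>2" "\<bar>sy z w\<bar> \<le> 2 * CARD('n) * r * (c2 * r)" for w :: "'n heis"
  proof -
    have "\<bar>sy z w / 2\<bar> = \<bar>sy z w\<bar> / 2" by simp
    also have "\<dots> \<le> 2 * real CARD('n) * r * (c2 * r) / 2" using that(2) by (intro divide_right_mono) auto
    finally have "\<bar>sy z w / 2\<bar> \<le> CARD('n) * c2 * r\<^sup>2" unfolding e .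
    then show ?thesis using that(1) zb(2) unfolding e2 distrib_right
      by (simp add: algebra_simps)
  qed
  have X: "\<forall>j. \<bar>fst (fst z) $ j + fst (fst w) $ j\<bar> \<le> (1 + c2) * r \<and> \<bar>snd (fst z) $ j + snd (fst w) $ j\<bar> \<le> (1 + c2) * r"
    if "\<forall>j. \<bar>fst (fst w) $ j\<bar> \<le> c2 * r \<and> \<bar>snd (fst w) $ j\<bar> \<le> c2 * r" for w :: "'n heis"
  proof
    fix j
    show "\<bar>fst (fst z) $ j + fst (fst w) $ j\<bar> \<le> (1 + c2) * r \<and> \<bar>snd (fst z) $ j + snd (fst w) $ j\<bar> \<le> (1 + c2) * r"
      using that[rule_format, of j] zb(1)[rule_format, of j] by (simp add: distrib_right) linarith
  qed
  show "heis_mult z y \<in> hbox ((1 + c2) * r) ((1 + c2\<^sup>2 + CARD('n) * c2) * r\<^sup>2)"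
    unfolding mem_hbox' heis_mult_eq using X[OF yb(1)] T[OF yb(2) s1] by simp
  show "heis_mult z (heis_inv y) \<in> hbox ((1 + c2) * r) ((1 + c2\<^sup>2 + CARD('n) * c2) * r\<^sup>2)"
    unfolding mem_hbox' heis_mult_eq[of z "heis_inv y"] using X[OF yib(1)] T[OF yib(2) s2] by simp
qed


lemma mfst: "(fst :: ('a::topological_space \<times> 'b::topological_space) \<Rightarrow> 'a) \<in> borel_measurable borel"
  by (rule borel_measurable_continuous_onI) (intro continuous_intros)
lemma msnd: "(snd :: ('a::topological_space \<times> 'b::topological_space) \<Rightarrow> 'b) \<in> borel_measurable borel"
  by (rule borel_measurable_continuous_onI) (intro continuous_intros)

lemma mind: "Z \<in> sets borel \<Longrightarrow> g \<in> borel_measurable M \<Longrightarrow> (\<lambda>p. indicator Z (g p) :: ennreal) \<in> borel_measurable M"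
  by (rule measurable_compose[OF _ borel_measurable_indicator]) auto

lemma Kb_borel: "{y :: 'n::finite heis. koranyi y \<le> b} \<in> sets borel"
proof -
  have "{y \<in> space borel. koranyi (y :: 'n heis) \<le> b} \<in> sets borel" by measurable
  then show ?thesis by simp
qed

lemma norm_int_le: "ennreal (norm (integral\<^sup>L M \<phi>)) \<le> (\<integral>\<^sup>+ x. ennreal (norm (\<phi> x)) \<partial>M)"
  by (cases "integrable M \<phi>") (auto simp: integral_norm_bound_ennreal not_integrable_integral_eq)

definition HH :: "real \<Rightarrow> ('n::finite heis \<Rightarrow> ennreal) \<Rightarrow> ('n heis \<Rightarrow> ennreal) \<Rightarrow> 'n heis \<Rightarrow> ennreal" where
  "HH b F G x = (\<integral>\<^sup>+ y. indicator {y. koranyi y \<le> b} y * (F (heis_mult x (heis_inv y)) * G (heis_mult x y)) \<partial>lborel)"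

lemma ptwise:
  fixes f g :: "'n::finite heis \<Rightarrow> complex"
  shows "ennreal (cmod (heis_bil a b f g x)) \<le> HH b (\<lambda>u. ennreal (cmod (f u))) (\<lambda>u. ennreal (cmod (g u))) x"
proof -
  have "ennreal (cmod (heis_bil a b f g x)) \<le>
     (\<integral>\<^sup>+ y. ennreal (norm (indicator (heis_annulus a b) y *\<^sub>R (f (heis_mult x (heis_inv y)) * g (heis_mult x y)))) \<partial>lborel)"
    unfolding heis_bil_def set_lebesgue_integral_def by (rule norm_int_le)
  also have "\<dots> \<le> HH b (\<lambda>u. ennreal (cmod (f u))) (\<lambda>u. ennreal (cmod (g u))) x"
    unfolding HH_def
  proof (rule nn_integral_mono)
    fix y :: "'n heis"
    show "ennreal (norm (indicator (heis_annulus a b) y *\<^sub>R (f (heis_mult x (heis_inv y)) * g (heis_mult x y))))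
      \<le> indicator {y. koranyi y \<le> b} y * (ennreal (cmod (f (heis_mult x (heis_inv y)))) * ennreal (cmod (g (heis_mult x y))))"
      by (auto simp: heis_annulus_def norm_mult ennreal_mult split: split_indicator)
  qed
  finally show ?thesis .
qed

lemma HH_meas:
  fixes F G :: "'n::finite heis \<Rightarrow> ennreal"
  assumes F: "F \<in> borel_measurable borel" and G: "G \<in> borel_measurable borel"
  shows "(\<lambda>p. indicator {y. koranyi y \<le> b} (snd p) * (F (heis_mult (fst p) (heis_inv (snd p))) * G (heis_mult (fst p) (snd p))))
     \<in> borel_measurable (borel :: ('n::finite heis \<times> 'n heis) measure)"
proof -
  have 1: "(\<lambda>p::'n heis \<times> 'n heis. indicator {y. koranyi y \<le> b} (snd p) :: ennreal) \<in> borel_measurable borel"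
    by (rule mind[OF Kb_borel msnd])
  have 2: "(\<lambda>p::'n heis \<times> 'n heis. F (heis_mult (fst p) (heis_inv (snd p)))) \<in> borel_measurable borel"
    by (rule measurable_compose[OF heis_mult_meas[OF mfst heis_inv_meas[OF msnd]] F])
  have 3: "(\<lambda>p::'n heis \<times> 'n heis. G (heis_mult (fst p) (snd p))) \<in> borel_measurable borel"
    by (rule measurable_compose[OF heis_mult_meas[OF mfst msnd] G])
  show ?thesis by (intro borel_measurable_times_ennreal 1 2 3)
qed

lemma HH_meas2:
  fixes F G :: "'n::finite heis \<Rightarrow> ennreal"
  assumes F: "F \<in> borel_measurable borel" and G: "G \<in> borel_measurable borel"
  shows "HH b F G \<in> borel_measurable (borel :: 'n::finite heis measure)"
proof -
  have "(\<lambda>x. \<integral>\<^sup>+ y. (\<lambda>p. indicator {y. koranyi y \<le> b} (snd p) * (F (heis_mult (fst p) (heis_inv (snd p))) * G (heis_mult (fst p) (snd p)))) (x, y) \<partial>lborel)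
     \<in> borel_measurable (borel :: 'n::finite heis measure)"
    by (rule meas_nn_int_snd[OF HH_meas[OF F G]])
  then show ?thesis unfolding HH_def[abs_def] by simp
qed

lemma L1_part:
  fixes f g :: "'n::finite heis \<Rightarrow> complex"
  assumes f: "f \<in> borel_measurable borel" and g: "g \<in> borel_measurable borel"
  shows "L1norm (heis_bil a b f g) \<le> L1norm f * L1norm g"
proof -
  define F where "F = (\<lambda>u. ennreal (cmod (f u)))"
  define G where "G = (\<lambda>u. ennreal (cmod (g u)))"
  have mF: "F \<in> borel_measurable borel" unfolding F_def using f by measurable
  have mG: "G \<in> borel_measurable borel" unfolding G_def using g by measurable
  define X where "X = (\<integral>\<^sup>+ x. (\<integral>\<^sup>+ y. F (heis_mult x (heis_inv y)) * G (heis_mult x y) \<partial>lborel) \<partial>lborel)"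
  have "L1norm (heis_bil a b f g) \<le> (\<integral>\<^sup>+ x. HH b F G x \<partial>lborel)"
    unfolding L1norm_def F_def G_def by (intro nn_integral_mono ptwise)
  also have "\<dots> \<le> X"
    unfolding HH_def X_def
    by (intro nn_integral_mono) (auto simp: indicator_def)
  also have "X \<le> 2 ^ DIM('n heis) * X"
  proof -
    have "(1::ennreal) \<le> 2 ^ DIM('n heis)" by (rule one_le_power) simp
    then show ?thesis using mult_right_mono[of 1 "2 ^ DIM('n heis)" X] by simp
  qed
  also have "\<dots> = (\<integral>\<^sup>+ x. F x \<partial>lborel) * (\<integral>\<^sup>+ x. G x \<partial>lborel)"
    unfolding X_def by (rule core[OF mF mG])
  also have "\<dots> = L1norm f * L1norm g"
    unfolding L1norm_def F_def G_def ..
  finally show ?thesis .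
qed


lemma ind_sq_ennreal: "(indicator A x :: ennreal) * indicator A x = indicator A x"
  by (simp split: split_indicator)

lemma Half_part:
  fixes f g :: "'n::finite heis \<Rightarrow> complex" and r c2 :: real
  assumes f: "f \<in> borel_measurable borel" and g: "g \<in> borel_measurable borel"
    and r: "0 < r" and c2: "0 < c2"
  defines "Z \<equiv> hbox r (r\<^sup>2) :: 'n heis set"
    and "N \<equiv> hbox ((1 + c2) * r) ((1 + c2\<^sup>2 + CARD('n) * c2) * r\<^sup>2) :: 'n heis set"
  shows "Lhalfnorm (heis_bil a (c2 * r) f g) * (emeasure lborel Z * 2 ^ DIM('n heis))
     \<le> (emeasure lborel N)\<^sup>2 * L1norm f * L1norm g"
proof -
  define F where "F = (\<lambda>u. ennreal (cmod (f u)))"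
  define G where "G = (\<lambda>u. ennreal (cmod (g u)))"
  have mF: "F \<in> borel_measurable borel" unfolding F_def using f by measurable
  have mG: "G \<in> borel_measurable borel" unfolding G_def using g by measurable
  define b where "b = c2 * r"
  define H where "H = HH b F G"
  have mH: "H \<in> borel_measurable borel" unfolding H_def by (rule HH_meas2[OF mF mG])
  define S where "S = (\<lambda>x. esqrt (H x))"
  have mS: "S \<in> borel_measurable borel" unfolding S_def using mH by (rule esqrt_meas')
  define I where "I = (\<integral>\<^sup>+ x. S x \<partial>lborel)"
  define mZ where "mZ = emeasure lborel Z"
  define mN where "mN = emeasure lborel N"
  have ZB: "Z \<in> sets borel" unfolding Z_def by (rule hbox_borel)
  have NB: "N \<in> sets borel" unfolding N_def by (rule hbox_borel)
  have mIZ: "(\<lambda>z. indicator Z z :: ennreal) \<in> borel_measurable borel" by (rule borel_measurable_indicator[OF ZB])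
  have mIN: "(\<lambda>z. indicator N z :: ennreal) \<in> borel_measurable borel" by (rule borel_measurable_indicator[OF NB])

  have step0: "Lhalfnorm (heis_bil a (c2 * r) f g) \<le> I\<^sup>2"
  proof -
    have "(\<integral>\<^sup>+ x. ennreal (sqrt (cmod (heis_bil a (c2 * r) f g x))) \<partial>lborel) \<le> I"
      unfolding I_def
    proof (rule nn_integral_mono)
      fix x
      have "ennreal (sqrt (cmod (heis_bil a (c2 * r) f g x))) = esqrt (ennreal (cmod (heis_bil a (c2 * r) f g x)))"
        by (simp add: esqrt_ennreal)
      also have "\<dots> \<le> S x" unfolding S_def H_def F_def G_def b_def
        by (intro esqrt_mono ptwise)
      finally show "ennreal (sqrt (cmod (heis_bil a (c2 * r) f g x))) \<le> S x" .
    qed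
    then show ?thesis unfolding Lhalfnorm_def by (intro power_mono) auto
  qed
  define A where "A = (\<lambda>w. \<integral>\<^sup>+ z. indicator Z z * S (heis_mult w z) \<partial>lborel)"
  have mA2: "(\<lambda>p::'n heis \<times> 'n heis. indicator Z (snd p) * S (heis_mult (fst p) (snd p))) \<in> borel_measurable borel"
    by (intro borel_measurable_times_ennreal mind[OF ZB msnd] measurable_compose[OF heis_mult_meas[OF mfst msnd] mS])
  have mA: "A \<in> borel_measurable borel"
    using meas_nn_int_snd[OF mA2] unfolding A_def by simp
  have mA3: "(\<lambda>p::'n heis \<times> 'n heis. indicator Z (fst p) * S (heis_mult (snd p) (fst p))) \<in> borel_measurable borel"
    by (intro borel_measurable_times_ennreal mind[OF ZB mfst] measurable_compose[OF heis_mult_meas[OF msnd mfst] mS])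
  have step1: "mZ * I = (\<integral>\<^sup>+ w. A w \<partial>lborel)"
  proof -
    have "mZ * I = (\<integral>\<^sup>+ z. indicator Z z \<partial>lborel) * I"
      unfolding mZ_def using ZB by simp
    also have "\<dots> = (\<integral>\<^sup>+ z. indicator Z z * I \<partial>lborel)"
      by (rule nn_integral_multc[symmetric]) (simp add: mIZ)
    also have "\<dots> = (\<integral>\<^sup>+ z. indicator Z z * (\<integral>\<^sup>+ w. S (heis_mult w z) \<partial>lborel) \<partial>lborel)"
      unfolding I_def by (simp add: right_inv[OF mS])
    also have "\<dots> = (\<integral>\<^sup>+ z. (\<integral>\<^sup>+ w. indicator Z z * S (heis_mult w z) \<partial>lborel) \<partial>lborel)"
      by (intro nn_integral_cong nn_integral_cmult[symmetric]) (simp add: meas_right[OF mS])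
    also have "\<dots> = (\<integral>\<^sup>+ w. (\<integral>\<^sup>+ z. indicator Z z * S (heis_mult w z) \<partial>lborel) \<partial>lborel)"
      by (rule lborel_pair.Fubini'[symmetric]) (unfold case_prod_beta, rule meas_pair_lborel[OF mA3])
    finally show ?thesis unfolding A_def .
  qed
  have step2: "(A w)\<^sup>2 \<le> mZ * (\<integral>\<^sup>+ z. indicator Z z * H (heis_mult w z) \<partial>lborel)" for w
  proof -
    have mSw: "(\<lambda>z. indicator Z z * S (heis_mult w z)) \<in> borel_measurable lborel"
      using borel_measurable_times_ennreal[OF mIZ meas_left[OF mS]] by simp
    have cs: "(\<integral>\<^sup>+ z. indicator Z z * (indicator Z z * S (heis_mult w z)) \<partial>lborel)\<^sup>2
       \<le> (\<integral>\<^sup>+ z. (indicator Z z)\<^sup>2 \<partial>lborel) * (\<integral>\<^sup>+ z. (indicator Z z * S (heis_mult w z))\<^sup>2 \<partial>lborel)"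
      by (rule Cauchy_Schwarz_nn_integral) (use mIZ mSw in simp_all)
    have e1: "(\<integral>\<^sup>+ z. indicator Z z * (indicator Z z * S (heis_mult w z)) \<partial>lborel) = A w"
      unfolding A_def by (intro nn_integral_cong) (simp split: split_indicator)
    have e2: "(\<integral>\<^sup>+ z. (indicator Z z :: ennreal)\<^sup>2 \<partial>lborel) = mZ"
      unfolding mZ_def power2_eq_square ind_sq_ennreal using ZB by simp
    have e3: "(\<integral>\<^sup>+ z. (indicator Z z * S (heis_mult w z))\<^sup>2 \<partial>lborel) = (\<integral>\<^sup>+ z. indicator Z z * H (heis_mult w z) \<partial>lborel)"
      unfolding S_def by (intro nn_integral_cong) (simp add: power_mult_distrib esqrt_sq split: split_indicator)
    show ?thesis using cs unfolding e1 e2 e3 .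
  qed
  define Fw where "Fw = (\<lambda>w u. indicator N u * F (heis_mult w u))"
  define Gw where "Gw = (\<lambda>w u. indicator N u * G (heis_mult w u))"
  define aa where "aa = (\<lambda>w. \<integral>\<^sup>+ u. Fw w u \<partial>lborel)"
  define bb where "bb = (\<lambda>w. \<integral>\<^sup>+ u. Gw w u \<partial>lborel)"
  have mFw: "Fw w \<in> borel_measurable borel" for w
    unfolding Fw_def by (intro borel_measurable_times_ennreal mIN meas_left[OF mF])
  have mGw: "Gw w \<in> borel_measurable borel" for w
    unfolding Gw_def by (intro borel_measurable_times_ennreal mIN meas_left[OF mG])
  have step3: "2 ^ DIM('n heis) * (\<integral>\<^sup>+ z. indicator Z z * H (heis_mult w z) \<partial>lborel) \<le> aa w * bb w" for w
  proof -
    define X where "X = (\<integral>\<^sup>+ z. (\<integral>\<^sup>+ y. Fw w (heis_mult z (heis_inv y)) * Gw w (heis_mult z y) \<partial>lborel) \<partial>lborel)"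
    have "(\<integral>\<^sup>+ z. indicator Z z * H (heis_mult w z) \<partial>lborel) \<le> X"
      unfolding X_def
    proof (rule nn_integral_mono)
      fix z :: "'n heis"
      show "indicator Z z * H (heis_mult w z) \<le> (\<integral>\<^sup>+ y. Fw w (heis_mult z (heis_inv y)) * Gw w (heis_mult z y) \<partial>lborel)"
      proof (cases "z \<in> Z")
        case False
        then show ?thesis by simp
      next
        case True
        have zz: "z \<in> hbox r (r\<^sup>2)" using True unfolding Z_def .
        have "H (heis_mult w z) \<le> (\<integral>\<^sup>+ y. Fw w (heis_mult z (heis_inv y)) * Gw w (heis_mult z y) \<partial>lborel)"
          unfolding H_def HH_def
        proof (rule nn_integral_mono)
          fix y :: "'n heis"
          show "indicator {y. koranyi y \<le> b} y * (F (heis_mult (heis_mult w z) (heis_inv y)) * G (heis_mult (heis_mult w z) y))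
              \<le> Fw w (heis_mult z (heis_inv y)) * Gw w (heis_mult z y)"
          proof (cases "koranyi y \<le> b")
            case False
            then show ?thesis by simp
          next
            case True
            then have y: "koranyi y \<le> c2 * r" unfolding b_def .
            have "heis_mult z (heis_inv y) \<in> N" "heis_mult z y \<in> N"
              unfolding N_def using box_mult[OF zz y r c2] by auto
            then show ?thesis using True unfolding Fw_def Gw_def by (simp add: heis_assoc')
          qed
        qed
        then show ?thesis using True by simp
      qed
    qed
    then have "2 ^ DIM('n heis) * (\<integral>\<^sup>+ z. indicator Z z * H (heis_mult w z) \<partial>lborel) \<le> 2 ^ DIM('n heis) * X"
      by (rule mult_left_mono) simp
    also have "\<dots> = aa w * bb w"
      unfolding X_def aa_def bb_def by (rule core[OF mFw mGw])
    finally show ?thesis .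
  qed
  have step4: "esqrt (2 ^ DIM('n heis)) * A w \<le> esqrt mZ * (esqrt (aa w) * esqrt (bb w))" for w
  proof (rule sq_le_imp_le_ennreal)
    have "(esqrt (2 ^ DIM('n heis)) * A w)\<^sup>2 = 2 ^ DIM('n heis) * (A w)\<^sup>2"
      by (simp add: power_mult_distrib esqrt_sq)
    also have "\<dots> \<le> 2 ^ DIM('n heis) * (mZ * (\<integral>\<^sup>+ z. indicator Z z * H (heis_mult w z) \<partial>lborel))"
      by (rule mult_left_mono[OF step2]) simp
    also have "\<dots> = mZ * (2 ^ DIM('n heis) * (\<integral>\<^sup>+ z. indicator Z z * H (heis_mult w z) \<partial>lborel))"
      by (simp add: ac_simps)
    also have "\<dots> \<le> mZ * (aa w * bb w)"
      by (rule mult_left_mono[OF step3]) simp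
    also have "\<dots> = (esqrt mZ * (esqrt (aa w) * esqrt (bb w)))\<^sup>2"
      by (simp add: power_mult_distrib esqrt_sq)
    finally show "(esqrt (2 ^ DIM('n heis)) * A w)\<^sup>2 \<le> (esqrt mZ * (esqrt (aa w) * esqrt (bb w)))\<^sup>2" .
  qed
  have maa2: "(\<lambda>p::'n heis \<times> 'n heis. indicator N (snd p) * F (heis_mult (fst p) (snd p))) \<in> borel_measurable borel"
    by (intro borel_measurable_times_ennreal mind[OF NB msnd] measurable_compose[OF heis_mult_meas[OF mfst msnd] mF])
  have mbb2: "(\<lambda>p::'n heis \<times> 'n heis. indicator N (snd p) * G (heis_mult (fst p) (snd p))) \<in> borel_measurable borel"
    by (intro borel_measurable_times_ennreal mind[OF NB msnd] measurable_compose[OF heis_mult_meas[OF mfst msnd] mG])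
  have maa: "aa \<in> borel_measurable borel"
    using meas_nn_int_snd[OF maa2] unfolding aa_def Fw_def by simp
  have mbb: "bb \<in> borel_measurable borel"
    using meas_nn_int_snd[OF mbb2] unfolding bb_def Gw_def by simp
  define J where "J = (\<integral>\<^sup>+ w. esqrt (aa w) * esqrt (bb w) \<partial>lborel)"
  have step5: "esqrt (2 ^ DIM('n heis)) * (mZ * I) \<le> esqrt mZ * J"
  proof -
    have "esqrt (2 ^ DIM('n heis)) * (mZ * I) = (\<integral>\<^sup>+ w. esqrt (2 ^ DIM('n heis)) * A w \<partial>lborel)"
      unfolding step1 by (rule nn_integral_cmult[symmetric]) (simp add: mA)
    also have "\<dots> \<le> (\<integral>\<^sup>+ w. esqrt mZ * (esqrt (aa w) * esqrt (bb w)) \<partial>lborel)"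
      by (intro nn_integral_mono step4)
    also have "\<dots> = esqrt mZ * J"
      unfolding J_def by (rule nn_integral_cmult) (simp add: borel_measurable_times_ennreal esqrt_meas'[OF maa] esqrt_meas'[OF mbb])
    finally show ?thesis .
  qed
  have step6: "J\<^sup>2 \<le> (\<integral>\<^sup>+ w. aa w \<partial>lborel) * (\<integral>\<^sup>+ w. bb w \<partial>lborel)"
    using Cauchy_Schwarz_nn_integral[of "\<lambda>w. esqrt (aa w)" lborel "\<lambda>w. esqrt (bb w)"] maa mbb
    unfolding J_def esqrt_sq by simp
  have step7: "(\<integral>\<^sup>+ w. (\<integral>\<^sup>+ u. indicator N u * K (heis_mult w u) \<partial>lborel) \<partial>lborel) = mN * (\<integral>\<^sup>+ x. K x \<partial>lborel)"
    if mK: "K \<in> borel_measurable borel"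
      and mK2: "(\<lambda>p::'n heis \<times> 'n heis. indicator N (snd p) * K (heis_mult (fst p) (snd p))) \<in> borel_measurable borel"
    for K :: "'n heis \<Rightarrow> ennreal"
  proof -
    have "(\<integral>\<^sup>+ w. (\<integral>\<^sup>+ u. indicator N u * K (heis_mult w u) \<partial>lborel) \<partial>lborel)
        = (\<integral>\<^sup>+ u. (\<integral>\<^sup>+ w. indicator N u * K (heis_mult w u) \<partial>lborel) \<partial>lborel)"
      by (rule lborel_pair.Fubini'[symmetric]) (unfold case_prod_beta, rule meas_pair_lborel[OF mK2])
    also have "\<dots> = (\<integral>\<^sup>+ u. indicator N u * (\<integral>\<^sup>+ w. K (heis_mult w u) \<partial>lborel) \<partial>lborel)"
      by (intro nn_integral_cong nn_integral_cmult) (simp add: meas_right[OF mK])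
    also have "\<dots> = (\<integral>\<^sup>+ u. indicator N u * (\<integral>\<^sup>+ x. K x \<partial>lborel) \<partial>lborel)"
      by (simp add: right_inv[OF mK])
    also have "\<dots> = (\<integral>\<^sup>+ u. indicator N u \<partial>lborel) * (\<integral>\<^sup>+ x. K x \<partial>lborel)"
      by (rule nn_integral_multc) (simp add: mIN)
    also have "\<dots> = mN * (\<integral>\<^sup>+ x. K x \<partial>lborel)"
      unfolding mN_def using NB by simp
    finally show ?thesis .
  qed
  have ia: "(\<integral>\<^sup>+ w. aa w \<partial>lborel) = mN * (\<integral>\<^sup>+ x. F x \<partial>lborel)"
    unfolding aa_def Fw_def by (rule step7[OF mF maa2])
  have ib: "(\<integral>\<^sup>+ w. bb w \<partial>lborel) = mN * (\<integral>\<^sup>+ x. G x \<partial>lborel)"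
    unfolding bb_def Gw_def by (rule step7[OF mG mbb2])
  have mZv: "mZ = ennreal ((2*r) ^ (2 * CARD('n)) * (2*r\<^sup>2))"
    unfolding mZ_def Z_def using r by (intro emeasure_hbox) auto
  have mZpos: "mZ \<noteq> 0" "mZ \<noteq> top" unfolding mZv using r by auto
  have "(esqrt (2 ^ DIM('n heis)) * (mZ * I))\<^sup>2 \<le> (esqrt mZ * J)\<^sup>2"
    by (rule power_mono[OF step5]) simp
  moreover have "(esqrt (2 ^ DIM('n heis)) * (mZ * I))\<^sup>2 = mZ * (2 ^ DIM('n heis) * mZ * I\<^sup>2)"
    by (simp only: power_mult_distrib esqrt_sq) (simp add: power2_eq_square ac_simps)
  moreover have "(esqrt mZ * J)\<^sup>2 = mZ * J\<^sup>2"
    by (simp only: power_mult_distrib esqrt_sq)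
  ultimately have "mZ * (2 ^ DIM('n heis) * mZ * I\<^sup>2) \<le> mZ * J\<^sup>2" by simp
  also have "\<dots> \<le> mZ * ((mN * (\<integral>\<^sup>+ x. F x \<partial>lborel)) * (mN * (\<integral>\<^sup>+ x. G x \<partial>lborel)))"
    by (rule mult_left_mono) (use step6 ia ib in auto)
  finally have "2 ^ DIM('n heis) * mZ * I\<^sup>2 \<le> (mN * (\<integral>\<^sup>+ x. F x \<partial>lborel)) * (mN * (\<integral>\<^sup>+ x. G x \<partial>lborel))"
    using ennreal_mult_le_mult_iff[OF mZpos] by simp
  then have fin: "I\<^sup>2 * (mZ * 2 ^ DIM('n heis)) \<le> mN\<^sup>2 * L1norm f * L1norm g"
    unfolding L1norm_def F_def G_def by (simp add: ac_simps power2_eq_square)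
  have "Lhalfnorm (heis_bil a (c2 * r) f g) * (mZ * 2 ^ DIM('n heis)) \<le> I\<^sup>2 * (mZ * 2 ^ DIM('n heis))"
    by (rule mult_right_mono[OF step0]) simp
  also note fin
  finally show ?thesis unfolding mZ_def mN_def .
qed


lemma const_calc:
  fixes r c2 :: real and n :: nat
  assumes r: "0 < r"
  shows "(((2*((1+c2)*r)) ^ (2*n) * (2*((1 + c2\<^sup>2 + n*c2)*r\<^sup>2)))\<^sup>2) / (((2*r) ^ (2*n) * (2*r\<^sup>2)) * 2 ^ (n + n + 1))
     = ((1+c2) ^ (4*n) * (1 + c2\<^sup>2 + n*c2)\<^sup>2) * r ^ (2*n+2)"
proof -
  define s where "s = (2::real)^n"
  define p where "p = (1+c2)^n"
  define t where "t = r^n"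
  define M where "M = 1 + c2\<^sup>2 + n*c2"
  have e1: "(2*((1+c2)*r)) ^ (2*n) = (s*p*t)\<^sup>2"
    unfolding s_def p_def t_def by (simp add: power_mult power_mult_distrib mult.commute)
  have e2: "(2*r) ^ (2*n) = (s*t)\<^sup>2"
    unfolding s_def t_def by (simp add: power_mult power_mult_distrib mult.commute)
  have e3: "(2::real) ^ (n + n + 1) = 2 * s\<^sup>2"
    unfolding s_def by (simp add: power_add power2_eq_square)
  have e4: "(1+c2) ^ (4*n) = p^4"
    unfolding p_def by (simp add: power_mult[symmetric] mult.commute)
  have e5: "r ^ (2*n+2) = t\<^sup>2 * r\<^sup>2"
    unfolding t_def by (simp add: power_add power_mult[symmetric] mult.commute power2_eq_square) (metis mult_2 power_add mult.commute)
  have pos: "s > 0" "t > 0" unfolding s_def t_def using r by auto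
  show ?thesis unfolding e1 e2 e3 e4 e5 M_def[symmetric]
    using pos r by (simp add: field_simps)
qed

lemma Half_final:
  fixes f g :: "'n::finite heis \<Rightarrow> complex" and r c2 :: real
  assumes f: "f \<in> borel_measurable borel" and g: "g \<in> borel_measurable borel"
    and r: "0 < r" and c2: "0 < c2"
  shows "Lhalfnorm (heis_bil a (c2 * r) f g)
     \<le> ennreal (((1+c2) ^ (4*CARD('n)) * (1 + c2\<^sup>2 + CARD('n)*c2)\<^sup>2) * r ^ (2*CARD('n)+2)) * L1norm f * L1norm g"
proof -
  define zz where "zz = (2*r) ^ (2 * CARD('n)) * (2*r\<^sup>2)"
  define nn where "nn = (2*((1+c2)*r)) ^ (2 * CARD('n)) * (2*((1 + c2\<^sup>2 + CARD('n)*c2)*r\<^sup>2))"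
  define dd where "dd = (2::real) ^ (CARD('n) + CARD('n) + 1)"
  have zpos: "zz > 0" unfolding zz_def using r by auto
  have dpos: "dd > 0" unfolding dd_def by auto
  have nn0: "nn \<ge> 0" unfolding nn_def using r c2 by auto
  have eZ: "emeasure lborel (hbox r (r\<^sup>2) :: 'n heis set) = ennreal zz"
    unfolding zz_def using r by (intro emeasure_hbox) auto
  have eN: "emeasure lborel (hbox ((1 + c2) * r) ((1 + c2\<^sup>2 + CARD('n) * c2) * r\<^sup>2) :: 'n heis set) = ennreal nn"
    unfolding nn_def using r c2 by (intro emeasure_hbox) auto
  have eD: "(2::ennreal) ^ DIM('n heis) = ennreal dd"
    unfolding dd_def by (simp add: ennreal_mult ennreal_power[symmetric])
  have H: "Lhalfnorm (heis_bil a (c2 * r) f g) * ennreal (zz * dd) \<le> ennreal (nn\<^sup>2) * (L1norm f * L1norm g)"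
    using Half_part[OF f g r c2, of a] unfolding eZ eN eD
    by (simp add: ennreal_mult[symmetric] zpos dpos ennreal_power nn0 less_imp_le ac_simps)
  have "Lhalfnorm (heis_bil a (c2 * r) f g) = Lhalfnorm (heis_bil a (c2 * r) f g) * ennreal (zz * dd) * ennreal (1 / (zz * dd))"
    using zpos dpos by (simp add: mult.assoc ennreal_mult[symmetric])
  also have "\<dots> \<le> ennreal (nn\<^sup>2) * (L1norm f * L1norm g) * ennreal (1 / (zz * dd))"
    by (rule mult_right_mono[OF H]) simp
  also have "\<dots> = ennreal (nn\<^sup>2 / (zz * dd)) * L1norm f * L1norm g"
    using zpos dpos by (simp add: ennreal_mult[symmetric] ac_simps)
  also have "nn\<^sup>2 / (zz * dd) = ((1+c2) ^ (4*CARD('n)) * (1 + c2\<^sup>2 + CARD('n)*c2)\<^sup>2) * r ^ (2*CARD('n)+2)"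
    unfolding nn_def zz_def dd_def by (rule const_calc[OF r])
  finally show ?thesis .
qed


lemma ennreal_coef_mono: "x \<le> y \<Longrightarrow> ennreal x * A * B \<le> ennreal y * A * (B :: ennreal)"
  by (intro mult_right_mono ennreal_leI) auto

theorem lemma2p1:
  fixes c1 c2 :: real
  assumes "0 < c1" and "c1 < c2"
  shows "\<exists>C::real. C > 0 \<and>
    (\<forall>(f :: 'n::finite heis \<Rightarrow> complex) (g :: 'n heis \<Rightarrow> complex) (k :: int).
       integrable lborel f \<longrightarrow> integrable lborel g \<longrightarrow>
         Lhalfnorm (heis_bil c1 c2 f g) \<le> ennreal C * L1norm f * L1norm g
       \<and> L1norm (heis_bil c1 c2 f g) \<le> ennreal C * L1norm f * L1norm g
       \<and> Lhalfnorm (heis_bil (c1 * 2 powr (- real_of_int k)) (c2 * 2 powr (- real_of_int k)) f g)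
           \<le> ennreal (C * 2 powr (- real (2 * CARD('n) + 2) * real_of_int k)) * L1norm f * L1norm g
       \<and> L1norm (heis_bil (c1 * 2 powr (- real_of_int k)) (c2 * 2 powr (- real_of_int k)) f g)
           \<le> ennreal C * L1norm f * L1norm g)"
proof -
  have c2: "0 < c2" using assms by linarith
  define Kc where "Kc = (1+c2) ^ (4*CARD('n)) * (1 + c2\<^sup>2 + CARD('n)*c2)\<^sup>2"
  define C where "C = max 1 Kc"
  have C1: "1 \<le> C" and CK: "Kc \<le> C" unfolding C_def by auto
  have Kc0: "0 \<le> Kc" unfolding Kc_def using c2 by auto
  show ?thesis
  proof (intro exI[of _ C] conjI allI impI)
    show "0 < C" using C1 by linarith
    fix f g :: "'n heis \<Rightarrow> complex" and k :: int
    assume fi: "integrable lborel f" and gi: "integrable lborel g"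
    have f: "f \<in> borel_measurable borel" using borel_measurable_integrable[OF fi] by simp
    have g: "g \<in> borel_measurable borel" using borel_measurable_integrable[OF gi] by simp
    have L1: "L1norm (heis_bil a b f g) \<le> ennreal C * L1norm f * L1norm g" for a b
    proof -
      have "L1norm (heis_bil a b f g) \<le> ennreal 1 * L1norm f * L1norm g"
        using L1_part[OF f g, of a b] by simp
      also have "\<dots> \<le> ennreal C * L1norm f * L1norm g" by (rule ennreal_coef_mono[OF C1])
      finally show ?thesis .
    qed
    show "L1norm (heis_bil c1 c2 f g) \<le> ennreal C * L1norm f * L1norm g" by (rule L1)
    show "L1norm (heis_bil (c1 * 2 powr (- real_of_int k)) (c2 * 2 powr (- real_of_int k)) f g)
           \<le> ennreal C * L1norm f * L1norm g" by (rule L1)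
    show "Lhalfnorm (heis_bil c1 c2 f g) \<le> ennreal C * L1norm f * L1norm g"
    proof -
      have "Lhalfnorm (heis_bil c1 (c2 * 1) f g) \<le> ennreal (Kc * 1 ^ (2*CARD('n)+2)) * L1norm f * L1norm g"
        unfolding Kc_def by (rule Half_final[OF f g _ c2]) simp
      also have "\<dots> \<le> ennreal C * L1norm f * L1norm g" by (rule ennreal_coef_mono) (simp add: CK)
      finally show ?thesis by simp
    qed
    show "Lhalfnorm (heis_bil (c1 * 2 powr (- real_of_int k)) (c2 * 2 powr (- real_of_int k)) f g)
           \<le> ennreal (C * 2 powr (- real (2 * CARD('n) + 2) * real_of_int k)) * L1norm f * L1norm g"
    proof -
      define r where "r = (2::real) powr (- real_of_int k)"
      have r: "0 < r" unfolding r_def by simp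
      have rp: "r ^ (2*CARD('n)+2) = 2 powr (- real (2 * CARD('n) + 2) * real_of_int k)"
      proof -
        have "r ^ (2*CARD('n)+2) = 2 powr (real (2*CARD('n)+2) * (- real_of_int k))"
          unfolding r_def by (rule powr_power) simp
        also have "real (2*CARD('n)+2) * (- real_of_int k) = - real (2 * CARD('n) + 2) * real_of_int k"
          by (simp only: mult_minus_left mult_minus_right)
        finally show ?thesis .
      qed
      have "Lhalfnorm (heis_bil (c1 * r) (c2 * r) f g) \<le> ennreal (Kc * r ^ (2*CARD('n)+2)) * L1norm f * L1norm g"
        unfolding Kc_def by (rule Half_final[OF f g r c2])
      also have "\<dots> \<le> ennreal (C * r ^ (2*CARD('n)+2)) * L1norm f * L1norm g"
        by (rule ennreal_coef_mono) (use CK r in simp)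
      finally have "Lhalfnorm (heis_bil (c1 * r) (c2 * r) f g) \<le> ennreal (C * r ^ (2*CARD('n)+2)) * L1norm f * L1norm g" .
      then show ?thesis unfolding rp unfolding r_def .
    qed
  qed
qed


end
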